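(* Let $K$ be a partition of a metric space $(Y,\rho)$ parametrized by a tree with a reference point $(T,\pi,\phi)$ and satisfying the basic framework with constants $\zeta\in(0,1)$ and $\xi>0$. Then there exist $\xi'>0$ and points $\{y_w\}_{w\in T}$ with $y_w\in K_w$ and $B_\rho(y_w,\xi'\zeta^{[w]})\subset K_w$ for all $w\in T$, such that $\bigcup_{w\in T_n}\{y_w\}\subset\bigcup_{w\in T_m}\{y_w\}$ whenever $n\le m$.
   Context: Trees and partitions: a tree with a reference point $(T,\pi,\phi)$ is a countable set $T$ with a map $\pi:T\to T$ such that $F_\pi=\{w:\pi^n(w)=w$ for some $n\ge1\}$ has at most one element, and for all $w,v$ there are $n,m\ge0$ with $\pi^n(w)=\pi^m(v)$; $\phi\in F_\pi$ if $F_\pi\neq\emptyset$, otherwise $\phi$ is a fixed element. Let $b(w,v)=\min\{n\ge0:\pi^n(w)=\pi^m(v)$ for some $m\ge0\}$, $[w]=b(w,\phi)-b(\phi,w)$, $T_n=\{w:[w]=n\}$ ($n\in\mathbb Z$), and $\acute\pi^{-k}(w)=\pi^{-k}(w)\cap T_{[w]+k}$. A partition of a metric space $(Y,\rho)$ parametrized by $(T,\pi,\phi)$ is a map $w\mapsto K_w\subset Y$ with: each $K_w$ compact, nonempty and not a single point; $\bigcup_{w\in T_0}K_w=Y$; $\bigcup_{v\in\acute\pi^{-1}(w)}K_v=K_w$ for all $w$; and $\bigcap_{k\in\mathbb Z}K_{w_k}$ is a single point whenever $(w_k)_{k\in\mathbb Z}$ satisfies $\pi(w_{k+1})=w_k$.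 Let $E_n=\{(w,v)\in T_n\times T_n:K_w\cap K_v\ne\emptyset,w\ne v\}$ and $l_n$ the graph distance on $(T_n,E_n)$ (possibly $\infty$). $K$ satisfies the basic framework if $\sup_w\#\acute\pi^{-1}(w)<\infty$ and: interiors of distinct $K_w,K_v$ with $[w]=[v]$ are disjoint; there is $\zeta\in(0,1)$ with $\mathrm{diam}_\rho(K_w)\asymp\zeta^{[w]}$; there is $\xi>0$ such that for each $w$ there is $x_w\in K_w$ with $B_\rho(x_w,\xi\zeta^{[w]})\subset K_w$; there is $M_*\in\mathbb N$ with $\rho(x,y)\asymp\zeta^{\Delta_{M_*}(x,y)}$, where $\Delta_m(x,y)=\sup\{n:x\in K_w,y\in K_v,l_n(w,v)\le m$ for some $w,v\in T_n\}$; and $L_*=\sup_w\#\{v:(w,v)\in E_{[w]}\}<\infty$. *)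

theory Defs
  imports "HOL-Analysis.Analysis"
begin

definition periodic_pts :: "'w set \<Rightarrow> ('w \<Rightarrow> 'w) \<Rightarrow> 'w set" where
  "periodic_pts T \<pi> = {w \<in> T. \<exists>n\<ge>1. (\<pi> ^^ n) w = w}"

definition tree_ref :: "'w set \<Rightarrow> ('w \<Rightarrow> 'w) \<Rightarrow> 'w \<Rightarrow> bool" where
  "tree_ref T \<pi> \<phi> \<longleftrightarrow>
     countable T \<and> (\<forall>w\<in>T. \<pi> w \<in> T) \<and>
     (\<forall>a\<in>periodic_pts T \<pi>. \<forall>b\<in>periodic_pts T \<pi>. a = b) \<and>
     (\<forall>w\<in>T. \<forall>v\<in>T. \<exists>n m. (\<pi> ^^ n) w = (\<pi> ^^ m) v) \<and>
     \<phi> \<in> T \<and> (periodic_pts T \<pi> \<noteq> {} \<longrightarrow> \<phi> \<in> periodic_pts T \<pi>)"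

definition bfun :: "('w \<Rightarrow> 'w) \<Rightarrow> 'w \<Rightarrow> 'w \<Rightarrow> nat" where
  "bfun \<pi> w v = (LEAST n. \<exists>m. (\<pi> ^^ n) w = (\<pi> ^^ m) v)"

definition level :: "('w \<Rightarrow> 'w) \<Rightarrow> 'w \<Rightarrow> 'w \<Rightarrow> int" where
  "level \<pi> \<phi> w = int (bfun \<pi> w \<phi>) - int (bfun \<pi> \<phi> w)"

definition Tlev :: "'w set \<Rightarrow> ('w \<Rightarrow> 'w) \<Rightarrow> 'w \<Rightarrow> int \<Rightarrow> 'w set" where
  "Tlev T \<pi> \<phi> n = {w \<in> T. level \<pi> \<phi> w = n}"

definition children :: "'w set \<Rightarrow> ('w \<Rightarrow> 'w) \<Rightarrow> 'w \<Rightarrow> 'w \<Rightarrow> 'w set" where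
  "children T \<pi> \<phi> w = {v \<in> T. \<pi> v = w \<and> level \<pi> \<phi> v = level \<pi> \<phi> w + 1}"

section \<open>Partitions (the metric space Y is the whole type 'a)\<close>

definition is_partition ::
  "'w set \<Rightarrow> ('w \<Rightarrow> 'w) \<Rightarrow> 'w \<Rightarrow> ('w \<Rightarrow> 'a::metric_space set) \<Rightarrow> bool" where
  "is_partition T \<pi> \<phi> K \<longleftrightarrow>
     (\<forall>w\<in>T. compact (K w) \<and> K w \<noteq> {} \<and> \<not> (\<exists>x. K w = {x})) \<and>
     (\<Union>w\<in>Tlev T \<pi> \<phi> 0. K w) = UNIV \<and>
     (\<forall>w\<in>T. (\<Union>v\<in>children T \<pi> \<phi> w. K v) = K w) \<and>
     (\<forall>ws :: int \<Rightarrow> 'w. (\<forall>k. ws k \<in> T \<and> \<pi> (ws (k + 1)) = ws k) \<longrightarrow>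
        (\<exists>x. (\<Inter>k. K (ws k)) = {x}))"

definition Eset :: "'w set \<Rightarrow> ('w \<Rightarrow> 'w) \<Rightarrow> 'w \<Rightarrow> ('w \<Rightarrow> 'a set) \<Rightarrow> int \<Rightarrow> ('w \<times> 'w) set" where
  "Eset T \<pi> \<phi> K n = {(w, v). w \<in> Tlev T \<pi> \<phi> n \<and> v \<in> Tlev T \<pi> \<phi> n \<and> K w \<inter> K v \<noteq> {} \<and> w \<noteq> v}"

definition gdist :: "'w set \<Rightarrow> ('w \<Rightarrow> 'w) \<Rightarrow> 'w \<Rightarrow> ('w \<Rightarrow> 'a set) \<Rightarrow> int \<Rightarrow> 'w \<Rightarrow> 'w \<Rightarrow> enat" where
  "gdist T \<pi> \<phi> K n w v = (INF k \<in> {k. (w, v) \<in> Eset T \<pi> \<phi> K n ^^ k}. enat k)"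

text \<open>Delta_m(x,y), valued in the extended reals (sup of the empty set is -infinity)\<close>
definition Delta :: "'w set \<Rightarrow> ('w \<Rightarrow> 'w) \<Rightarrow> 'w \<Rightarrow> ('w \<Rightarrow> 'a set) \<Rightarrow> nat \<Rightarrow> 'a \<Rightarrow> 'a \<Rightarrow> ereal" where
  "Delta T \<pi> \<phi> K m x y = Sup {ereal (real_of_int n) | n. \<exists>w\<in>Tlev T \<pi> \<phi> n. \<exists>v\<in>Tlev T \<pi> \<phi> n.
        x \<in> K w \<and> y \<in> K v \<and> gdist T \<pi> \<phi> K n w v \<le> enat m}"

definition epow :: "real \<Rightarrow> ereal \<Rightarrow> ereal" where
  "epow z D = (case D of ereal r \<Rightarrow> ereal (z powr r) | PInfty \<Rightarrow> 0 | MInfty \<Rightarrow> PInfty)"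

definition basic_framework ::
  "'w set \<Rightarrow> ('w \<Rightarrow> 'w) \<Rightarrow> 'w \<Rightarrow> ('w \<Rightarrow> 'a::metric_space set) \<Rightarrow> real \<Rightarrow> real \<Rightarrow> bool" where
  "basic_framework T \<pi> \<phi> K \<zeta> \<xi> \<longleftrightarrow>
     (\<exists>N::nat. \<forall>w\<in>T. finite (children T \<pi> \<phi> w) \<and> card (children T \<pi> \<phi> w) \<le> N) \<and>
     (\<forall>w\<in>T. \<forall>v\<in>T. w \<noteq> v \<and> level \<pi> \<phi> w = level \<pi> \<phi> v \<longrightarrow>
        interior (K w) \<inter> interior (K v) = {}) \<and>
     0 < \<zeta> \<and> \<zeta> < 1 \<and>
     (\<exists>c1 c2. 0 < c1 \<and> 0 < c2 \<and> (\<forall>w\<in>T.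
        c1 * \<zeta> powr (real_of_int (level \<pi> \<phi> w)) \<le> diameter (K w) \<and>
        diameter (K w) \<le> c2 * \<zeta> powr (real_of_int (level \<pi> \<phi> w)))) \<and>
     0 < \<xi> \<and>
     (\<forall>w\<in>T. \<exists>x\<in>K w. ball x (\<xi> * \<zeta> powr (real_of_int (level \<pi> \<phi> w))) \<subseteq> K w) \<and>
     (\<exists>M::nat. 1 \<le> M \<and> (\<exists>c1 c2. 0 < c1 \<and> 0 < c2 \<and> (\<forall>x y.
        ereal c1 * epow \<zeta> (Delta T \<pi> \<phi> K M x y) \<le> ereal (dist x y) \<and>
        ereal (dist x y) \<le> ereal c2 * epow \<zeta> (Delta T \<pi> \<phi> K M x y)))) \<and>
     (\<exists>L::nat. \<forall>w\<in>T. finite {v. (w, v) \<in> Eset T \<pi> \<phi> K (level \<pi> \<phi> w)} \<and>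
        card {v. (w, v) \<in> Eset T \<pi> \<phi> K (level \<pi> \<phi> w)} \<le> L)"

end

theory Submission
  imports Defs
begin


lemma nest_nonempty:
  fixes F :: "nat \<Rightarrow> 'a::metric_space set"
  assumes c: "\<And>n. compact (F n)" and ne: "\<And>n. F n \<noteq> {}" and dec: "\<And>n. F (Suc n) \<subseteq> F n"
  shows "(\<Inter>n. F n) \<noteq> {}"
proof -
  have mono: "m \<le> n \<Longrightarrow> F n \<subseteq> F m" for m n
    using dec by (rule lift_Suc_antimono_le)
  have "F 0 \<inter> (\<Inter>i\<in>UNIV. F i) \<noteq> {}"
  proof (rule compact_imp_fip_image[OF c])
    show "closed (F i)" for i using c compact_imp_closed by blast
    fix I' :: "nat set" assume "finite I'" "I' \<subseteq> UNIV"
    show "F 0 \<inter> (\<Inter>i\<in>I'. F i) \<noteq> {}"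
    proof (cases "I' = {}")
      case True then show ?thesis using ne by simp
    next
      case False
      have "F (Max I') \<subseteq> F 0 \<inter> (\<Inter>i\<in>I'. F i)"
        using mono[OF Max_ge[OF \<open>finite I'\<close>]] mono[of 0] by blast
      then show ?thesis using ne by blast
    qed
  qed
  then show ?thesis by blast
qed


fun qf :: "('w \<Rightarrow> 'w) \<Rightarrow> ('w \<Rightarrow> 'a set) \<Rightarrow> ('w \<Rightarrow> 'a) \<Rightarrow> nat \<Rightarrow> 'w \<Rightarrow> 'a" where
  "qf p K x 0 v = x v"
| "qf p K x (Suc r) v = (if qf p K x r (p v) \<in> K v then qf p K x r (p v) else x v)"

theorem mainTheorem14:
  fixes T :: "'w set" and \<pi> :: "'w \<Rightarrow> 'w" and \<phi> :: 'w
    and K :: "'w \<Rightarrow> 'a::metric_space set" and \<zeta> \<xi> :: real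
  assumes "tree_ref T \<pi> \<phi>"
    and "is_partition T \<pi> \<phi> K"
    and "basic_framework T \<pi> \<phi> K \<zeta> \<xi>"
  shows "\<exists>\<xi>'>0. \<exists>y :: 'w \<Rightarrow> 'a.
           (\<forall>w\<in>T. y w \<in> K w \<and>
              ball (y w) (\<xi>' * \<zeta> powr (real_of_int (level \<pi> \<phi> w))) \<subseteq> K w) \<and>
           (\<forall>n m. n \<le> m \<longrightarrow> y ` Tlev T \<pi> \<phi> n \<subseteq> y ` Tlev T \<pi> \<phi> m)"
proof -
  define lev where "lev w = level \<pi> \<phi> w" for w
  define ch where "ch w = children T \<pi> \<phi> w" for w
  have part: "\<And>w. w \<in> T \<Longrightarrow> compact (K w) \<and> K w \<noteq> {}"
    and chU: "\<And>w. w \<in> T \<Longrightarrow> (\<Union>v\<in>ch w. K v) = K w"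
    using assms(2) unfolding is_partition_def ch_def by auto
  have chP: "\<And>w c. c \<in> ch w \<Longrightarrow> c \<in> T \<and> \<pi> c = w \<and> lev c = lev w + 1"
    unfolding ch_def children_def lev_def by auto
  have zeta: "0 < \<zeta>" "\<zeta> < 1" and xi: "0 < \<xi>"
    and hx: "\<forall>w\<in>T. \<exists>x\<in>K w. ball x (\<xi> * \<zeta> powr (real_of_int (lev w))) \<subseteq> K w"
    using assms(3) unfolding basic_framework_def lev_def by auto
  have "\<exists>c2. 0 < c2 \<and> (\<forall>w\<in>T. diameter (K w) \<le> c2 * \<zeta> powr (real_of_int (lev w)))"
    using assms(3) unfolding basic_framework_def lev_def by meson
  then obtain c2 where c2: "0 < c2" "\<And>w. w \<in> T \<Longrightarrow> diameter (K w) \<le> c2 * \<zeta> powr (real_of_int (lev w))"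
    by blast
  obtain n0 where n0: "\<zeta> ^ n0 < \<xi> / (2 * c2)"
    using real_arch_pow_inv[of "\<xi> / (2 * c2)" \<zeta>] zeta xi c2 by auto
  define j where "j = Suc n0"
  have j1: "1 \<le> j" unfolding j_def by simp
  have jb: "c2 * \<zeta> ^ j \<le> \<xi> / 2"
  proof -
    have "\<zeta> ^ j \<le> \<zeta> ^ n0" unfolding j_def using zeta by (simp add: power_le_imp_le_exp)
    then have "\<zeta> ^ j \<le> \<xi> / (2 * c2)" using n0 by linarith
    then show ?thesis using c2 by (simp add: field_simps)
  qed
  define x where "x w = (SOME p. p \<in> K w \<and> ball p (\<xi> * \<zeta> powr (real_of_int (lev w))) \<subseteq> K w)" for w
  have xP: "x w \<in> K w \<and> ball (x w) (\<xi> * \<zeta> powr (real_of_int (lev w))) \<subseteq> K w" if "w \<in> T" for w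
    unfolding x_def using hx that by (metis (no_types, lifting) someI_ex)
  have qfK: "qf \<pi> K x r v \<in> K v" if "v \<in> T" for r v
    using that xP by (cases r) auto
  define q where "q v = qf \<pi> K x (nat (lev v mod int j)) v" for v
  have qK: "v \<in> T \<Longrightarrow> q v \<in> K v" for v unfolding q_def using qfK by blast
  define d where "d u = (SOME c. c \<in> ch u \<and> q u \<in> K c)" for u
  have dP: "d u \<in> ch u \<and> q u \<in> K (d u)" if "u \<in> T" for u
  proof -
    have "\<exists>c. c \<in> ch u \<and> q u \<in> K c" using qK[OF that] chU[OF that] by blast
    then show ?thesis unfolding d_def by (rule someI_ex)
  qed
  have dsub: "K (d u) \<subseteq> K u" if "u \<in> T" for u
    using dP[OF that] chU[OF that] by blast
  have dk: "(d ^^ k) v \<in> T \<and> lev ((d ^^ k) v) = lev v + int k" if "v \<in> T" for k v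
  proof (induction k)
    case 0 then show ?case using that by simp
  next
    case (Suc k) then show ?case using dP chP by fastforce
  qed
  have dkK: "K ((d ^^ k) v) \<subseteq> K v" if "v \<in> T" for k v
  proof (induction k)
    case 0 then show ?case by simp
  next
    case (Suc k) then show ?case using dsub dk[OF that, of k] by fastforce
  qed
  define S where "S v = (\<Inter>k. K ((d ^^ k) v))" for v
  have Sne: "S v \<noteq> {}" if "v \<in> T" for v
    unfolding S_def
  proof (rule nest_nonempty)
    show "compact (K ((d ^^ n) v))" for n using part dk[OF that] by blast
    show "K ((d ^^ n) v) \<noteq> {}" for n using part dk[OF that] by blast
    show "K ((d ^^ Suc n) v) \<subseteq> K ((d ^^ n) v)" for n using dsub dk[OF that] by simp
  qed
  have Sd: "S (d v) = S v" if "v \<in> T" for v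
  proof -
    have "S v = K v \<inter> S (d v)"
      unfolding S_def
    proof (rule set_eqI, rule iffI)
      fix z assume "z \<in> (\<Inter>k. K ((d ^^ k) v))"
      then have hz: "\<And>k. z \<in> K ((d ^^ k) v)" by blast
      have "z \<in> K v" using hz[of 0] by simp
      moreover have "z \<in> K ((d ^^ k) (d v))" for k
        using hz[of "Suc k"] by (simp only: funpow_Suc_right o_apply)
      ultimately show "z \<in> K v \<inter> (\<Inter>k. K ((d ^^ k) (d v)))" by blast
    next
      fix z assume "z \<in> K v \<inter> (\<Inter>k. K ((d ^^ k) (d v)))"
      then have z1: "z \<in> K v" and z2: "\<And>k. z \<in> K ((d ^^ k) (d v))" by blast+
      have "z \<in> K ((d ^^ k) v)" for k
      proof (cases k)
        case 0 then show ?thesis using z1 by simp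
      next
        case (Suc k') then show ?thesis using z2[of k'] by (simp only: funpow_Suc_right o_apply)
      qed
      then show "z \<in> (\<Inter>k. K ((d ^^ k) v))" by blast
    qed
    moreover have "S (d v) \<subseteq> K v" unfolding S_def using dsub[OF that] by (metis INT_lower UNIV_I funpow_0 subset_trans)
    ultimately show ?thesis by blast
  qed
  define y where "y v = (SOME p. p \<in> S v)" for v
  have yS: "v \<in> T \<Longrightarrow> y v \<in> S v" for v unfolding y_def using Sne by (simp add: some_in_eq)
  have yd: "y ((d ^^ k) v) = y v \<and> S ((d ^^ k) v) = S v" if "v \<in> T" for k v
  proof (induction k)
    case 0 then show ?case by simp
  next
    case (Suc k) then show ?case using Sd dk[OF that, of k] unfolding y_def by simp
  qed
  have qx: "\<forall>k<j. q ((d ^^ k) w) = x w" if w: "w \<in> T" "lev w mod int j = 0" for w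
  proof (intro allI impI)
    fix k assume "k < j" then show "q ((d ^^ k) w) = x w"
    proof (induction k)
      case 0 then show ?case unfolding q_def using w by simp
    next
      case (Suc k)
      define u where "u = (d ^^ k) w"
      have uT: "u \<in> T" unfolding u_def using dk w by blast
      have u': "(d ^^ Suc k) w = d u" unfolding u_def by simp
      have modk: "(lev w + int m) mod int j = int m" if "m < j" for m
        using w(2) that by (metis add.commute mod_add_right_eq mod_pos_pos_trivial of_nat_0_le_iff of_nat_less_iff plus_int_code(1))
      have lu: "nat (lev u mod int j) = k" unfolding u_def using dk[OF w(1), of k] modk[of k] Suc by simp
      have lu': "nat (lev (d u) mod int j) = Suc k" using dk[OF w(1), of "Suc k"] modk[of "Suc k"] Suc u' by simp
      have pu: "\<pi> (d u) = u" using dP[OF uT] chP by blast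
      have "q (d u) = q u"
        unfolding q_def using lu lu' pu dP[OF uT] unfolding q_def by simp
      then show ?case using Suc u' u_def by simp
    qed
  qed
  define \<xi>' where "\<xi>' = \<xi> / 2 * \<zeta> ^ j"
  have xi'pos: "\<xi>' > 0" unfolding \<xi>'_def using xi zeta by simp
  have ball: "ball (y v) (\<xi>' * \<zeta> powr (real_of_int (lev v))) \<subseteq> K v" if vT: "v \<in> T" for v
  proof -
    define i where "i = nat ((- lev v) mod int j)"
    have ij: "i < j" unfolding i_def using j1 by (simp add: nat_less_iff)
    define w where "w = (d ^^ i) v"
    have wT: "w \<in> T" and lw: "lev w = lev v + int i" unfolding w_def using dk[OF vT] by auto
    have ii: "int i = (- lev v) mod int j" unfolding i_def using j1 by simp
    have wm: "lev w mod int j = 0" unfolding lw ii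
      by (simp only: mod_add_right_eq) simp
    have yw: "y v = y w" and Sw: "S w = S v" unfolding w_def using yd[OF vT] by auto
    define u where "u = (d ^^ j) w"
    have uT: "u \<in> T" and lu: "lev u = lev w + int j" unfolding u_def using dk[OF wT] by auto
    have xu: "x w \<in> K u"
    proof -
      have "q ((d ^^ (j - 1)) w) = x w" using qx[OF wT wm] j1 by simp
      moreover have "(d ^^ (j - 1)) w \<in> T" using dk[OF wT] by blast
      then have "q ((d ^^ (j - 1)) w) \<in> K (d ((d ^^ (j - 1)) w))" using dP by blast
      moreover obtain j' where j': "j = Suc j'" using j1 by (cases j) auto
      then have "d ((d ^^ (j - 1)) w) = u" unfolding u_def by simp
      ultimately show ?thesis by simp
    qed
    have yu: "y w \<in> K u" using yS[OF wT] unfolding S_def u_def by blast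
    have "dist (y w) (x w) \<le> diameter (K u)"
      using part[OF uT] compact_imp_bounded diameter_bounded_bound xu yu by blast
    also have "\<dots> \<le> c2 * \<zeta> powr (real_of_int (lev u))" using c2 uT by blast
    also have "\<dots> = c2 * \<zeta> ^ j * \<zeta> powr (real_of_int (lev w))"
      unfolding lu using zeta by (simp add: powr_add powr_realpow)
    also have "\<dots> \<le> \<xi> / 2 * \<zeta> powr (real_of_int (lev w))"
      using jb zeta by (intro mult_right_mono) auto
    finally have dyx: "dist (y w) (x w) \<le> \<xi> / 2 * \<zeta> powr (real_of_int (lev w))" .
    have rad: "\<xi>' * \<zeta> powr (real_of_int (lev v)) \<le> \<xi> / 2 * \<zeta> powr (real_of_int (lev w))"
    proof -
      have "\<xi>' * \<zeta> powr (real_of_int (lev v)) = \<xi> / 2 * \<zeta> powr (real_of_int (lev v) + real j)"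
        unfolding \<xi>'_def using zeta by (simp add: powr_add powr_realpow)
      also have "\<dots> \<le> \<xi> / 2 * \<zeta> powr (real_of_int (lev w))"
        using xi zeta ij lw by (intro mult_left_mono powr_mono') auto
      finally show ?thesis .
    qed
    have "ball (y v) (\<xi>' * \<zeta> powr (real_of_int (lev v))) \<subseteq> ball (x w) (\<xi> * \<zeta> powr (real_of_int (lev w)))"
    proof
      fix z assume "z \<in> ball (y v) (\<xi>' * \<zeta> powr (real_of_int (lev v)))"
      then have "dist (y w) z < \<xi> / 2 * \<zeta> powr (real_of_int (lev w))" using rad yw by simp
      moreover have "dist (x w) z \<le> dist (x w) (y w) + dist (y w) z" by (rule dist_triangle)
      moreover have "dist (x w) (y w) \<le> \<xi> / 2 * \<zeta> powr (real_of_int (lev w))" using dyx by (simp add: dist_commute)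
      ultimately show "z \<in> ball (x w) (\<xi> * \<zeta> powr (real_of_int (lev w)))" by simp
    qed
    also have "\<dots> \<subseteq> K w" using xP[OF wT] by blast
    also have "\<dots> \<subseteq> K v" unfolding w_def using dkK[OF vT] by blast
    finally show ?thesis .
  qed
  have yK: "y v \<in> K v" if "v \<in> T" for v using yS[OF that] unfolding S_def by (metis INT_E UNIV_I funpow_0)
  show ?thesis
  proof (intro exI[of _ \<xi>'] conjI xi'pos exI[of _ y] ballI allI impI)
    fix w assume "w \<in> T" then show "y w \<in> K w" "ball (y w) (\<xi>' * \<zeta> powr (real_of_int (level \<pi> \<phi> w))) \<subseteq> K w"
      using yK ball unfolding lev_def by auto
  next
    fix n m :: int assume nm: "n \<le> m"
    show "y ` Tlev T \<pi> \<phi> n \<subseteq> y ` Tlev T \<pi> \<phi> m"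
    proof
      fix z assume "z \<in> y ` Tlev T \<pi> \<phi> n"
      then obtain w where w: "w \<in> T" "lev w = n" "z = y w" unfolding Tlev_def lev_def by auto
      define u where "u = (d ^^ nat (m - n)) w"
      have "u \<in> T" "lev u = m" unfolding u_def using dk[OF w(1)] w nm by auto
      moreover have "y u = z" unfolding u_def using yd w by auto
      ultimately show "z \<in> y ` Tlev T \<pi> \<phi> m" unfolding Tlev_def lev_def by auto
    qed
  qed
qed

end
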